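(* For any $\alpha\in[0,1/2)$, if a deterministic algorithm for the $\{0,1\}$-speed SSP problem is $(1+\alpha)$-consistent, then its robustness is at least $(4-2\alpha)/3$.
   Context: $\{0,1\}$-speed SSP: there are $n$ jobs with processing times $p_1,\dots,p_n\ge0$ and $m$ machines, each of speed $0$ (unavailable) or $1$ (available). In the partitioning stage the algorithm knows $\mathbf p$, $m$ and a prediction $\hat m$ of the number of available machines, and partitions the jobs into $m$ possibly empty bags. In the scheduling stage the actual number $m_0\ge1$ of available machines is revealed and each bag is assigned whole to one of the $m_0$ identical unit-speed machines; the makespan is the maximum total processing time on a machine. $opt(\mathbf p,x)$ is the minimum makespan of scheduling the individual jobs on $x$ identical unit-speed machines; $alg(\mathbf p,\hat m,m_0)$ is the algorithm's makespan. An algorithm is $c$-consistent if $alg(\mathbf p,m_0,m_0)\le c\cdot opt(\mathbf p,m_0)$ for all $\mathbf p,m_0$; its robustness is $\sup_{\mathbf p,\hat m,m_0} alg(\mathbf p,\hat m,m_0)/opt(\mathbf p,m_0)$. *)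

theory Defs
  imports Complex_Main "HOL-Library.FuncSet" "HOL-Library.Extended_Real"
begin

text \<open>Jobs are a list p of processing times; job j (j < length p) has time p!j.
  Machines, bags are indexed by naturals 0,1,....
  An assignment g maps job indices to machine indices.\<close>

definition load :: "real list \<Rightarrow> (nat \<Rightarrow> nat) \<Rightarrow> nat \<Rightarrow> real" where
  "load p g k = (\<Sum>j\<in>{j. j < length p \<and> g j = k}. p ! j)"

definition makespan :: "real list \<Rightarrow> (nat \<Rightarrow> nat) \<Rightarrow> nat \<Rightarrow> real" where
  "makespan p g x = Max ((\<lambda>k. load p g k) ` {..<x})"

definition opt :: "real list \<Rightarrow> nat \<Rightarrow> real" where
  "opt p x = Min ((\<lambda>g. makespan p g x) ` ({..<length p} \<rightarrow>\<^sub>E {..<x}))"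

text \<open>A deterministic algorithm is given by a partitioning function
  part p m mh : job index \<Rightarrow> bag index (bags 0..m-1)
  and a scheduling function
  sched p m mh m0 : bag index \<Rightarrow> machine index (machines 0..m0-1).\<close>

definition valid_input :: "real list \<Rightarrow> nat \<Rightarrow> nat \<Rightarrow> bool" where
  "valid_input p m mh \<longleftrightarrow> (\<forall>x\<in>set p. 0 \<le> x) \<and> 1 \<le> mh \<and> mh \<le> m"

definition valid_alg ::
  "(real list \<Rightarrow> nat \<Rightarrow> nat \<Rightarrow> nat \<Rightarrow> nat) \<Rightarrow>
   (real list \<Rightarrow> nat \<Rightarrow> nat \<Rightarrow> nat \<Rightarrow> nat \<Rightarrow> nat) \<Rightarrow> bool" where
  "valid_alg part sched \<longleftrightarrow>
     (\<forall>p m mh. valid_input p m mh \<longrightarrow>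
        (\<forall>j < length p. part p m mh j < m) \<and>
        (\<forall>m0. 1 \<le> m0 \<and> m0 \<le> m \<longrightarrow> (\<forall>i < m. sched p m mh m0 i < m0)))"

definition alg ::
  "(real list \<Rightarrow> nat \<Rightarrow> nat \<Rightarrow> nat \<Rightarrow> nat) \<Rightarrow>
   (real list \<Rightarrow> nat \<Rightarrow> nat \<Rightarrow> nat \<Rightarrow> nat \<Rightarrow> nat) \<Rightarrow>
   real list \<Rightarrow> nat \<Rightarrow> nat \<Rightarrow> nat \<Rightarrow> real" where
  "alg part sched p m mh m0 = makespan p (\<lambda>j. sched p m mh m0 (part p m mh j)) m0"

definition consistent ::
  "(real list \<Rightarrow> nat \<Rightarrow> nat \<Rightarrow> nat \<Rightarrow> nat) \<Rightarrow>
   (real list \<Rightarrow> nat \<Rightarrow> nat \<Rightarrow> nat \<Rightarrow> nat \<Rightarrow> nat) \<Rightarrow> real \<Rightarrow> bool" where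
  "consistent part sched c \<longleftrightarrow>
     (\<forall>p m m0. valid_input p m m0 \<longrightarrow> alg part sched p m m0 m0 \<le> c * opt p m0)"

text \<open>Robustness: supremum of alg/opt over all instances (p, m, mh, m0), with 1 \<le> m0 \<le> m.
  (When opt = 0 all jobs are 0 and the ratio 0/0 is taken as 0.)\<close>
definition robustness ::
  "(real list \<Rightarrow> nat \<Rightarrow> nat \<Rightarrow> nat \<Rightarrow> nat) \<Rightarrow>
   (real list \<Rightarrow> nat \<Rightarrow> nat \<Rightarrow> nat \<Rightarrow> nat \<Rightarrow> nat) \<Rightarrow> ereal" where
  "robustness part sched =
     (SUP (p, m, mh, m0) \<in> {(p, m, mh, m0). valid_input p m mh \<and> 1 \<le> m0 \<and> m0 \<le> m}.
        ereal (alg part sched p m mh m0 / opt p m0))"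

end

theory Submission
  imports Defs
begin

lemma load_rep: "load (replicate n 1) g k = real (card {j. j < n \<and> g j = k})"
proof -
  have "load (replicate n 1) g k = (\<Sum>j\<in>{j. j < n \<and> g j = k}. (1::real))"
    unfolding load_def by (intro sum.cong) auto
  thus ?thesis by simp
qed

lemma makespan_ge: "k < x \<Longrightarrow> load p g k \<le> makespan p g x"
  unfolding makespan_def by (intro Max_ge) auto

lemma makespan_le: "1 \<le> x \<Longrightarrow> (\<And>k. k < x \<Longrightarrow> load p g k \<le> B) \<Longrightarrow> makespan p g x \<le> B"
  unfolding makespan_def by (subst Max_le_iff) (auto simp: lessThan_empty_iff)

lemma opt_le: "g \<in> {..<length p} \<rightarrow>\<^sub>E {..<x} \<Longrightarrow> opt p x \<le> makespan p g x"
  unfolding opt_def by (intro Min_le) (auto intro: finite_PiE)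

lemma opt_ge: assumes "g0 \<in> {..<length p} \<rightarrow>\<^sub>E {..<x}"
  and "\<And>g. g \<in> {..<length p} \<rightarrow>\<^sub>E {..<x} \<Longrightarrow> B \<le> makespan p g x"
  shows "B \<le> opt p x"
  unfolding opt_def using assms by (subst Min_ge_iff) (auto intro: finite_PiE)

definition P6 :: "real list" where "P6 = replicate 6 1"

lemma card6: "card {j::nat. j < 6 \<and> j mod 3 = k} \<le> 2" if "k < 3"
proof -
  have "{j::nat. j < 6 \<and> j mod 3 = k} \<subseteq> {k, k+3}"
  proof
    fix j assume "j \<in> {j::nat. j < 6 \<and> j mod 3 = k}"
    hence "j = k \<or> j = k + 3" by simp presburger
    thus "j \<in> {k, k+3}" by simp
  qed
  hence "card {j::nat. j < 6 \<and> j mod 3 = k} \<le> card {k, k+3}" by (intro card_mono) auto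
  also have "\<dots> \<le> 2" by (simp add: card_insert_if)
  finally show ?thesis .
qed

lemma card6b: "card {j::nat. j < 6 \<and> j mod 2 = k} \<le> 3" if "k < 2"
proof -
  have "{j::nat. j < 6 \<and> j mod 2 = k} \<subseteq> {k, k+2, k+4}"
  proof
    fix j assume "j \<in> {j::nat. j < 6 \<and> j mod 2 = k}"
    hence "j = k \<or> j = k + 2 \<or> j = k + 4" by simp presburger
    thus "j \<in> {k, k+2, k+4}" by simp
  qed
  hence "card {j::nat. j < 6 \<and> j mod 2 = k} \<le> card {k, k+2, k+4}" by (intro card_mono) auto
  also have "\<dots> \<le> 3" by (simp add: card_insert_if)
  finally show ?thesis .
qed

lemma opt3: "opt P6 3 \<le> 2"
proof -
  let ?g = "restrict (\<lambda>j. j mod 3) {..<6}"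
  have g: "?g \<in> {..<length P6} \<rightarrow>\<^sub>E {..<3}" by (auto simp: P6_def)
  have "makespan P6 ?g 3 \<le> 2"
  proof (rule makespan_le)
    fix k :: nat assume k: "k < 3"
    have "{j. j < 6 \<and> ?g j = k} = {j::nat. j < 6 \<and> j mod 3 = k}" by auto
    thus "load P6 ?g k \<le> 2" using card6[OF k] unfolding P6_def load_rep by simp
  qed simp
  thus ?thesis using opt_le[OF g] by simp
qed

lemma opt2: "opt P6 2 \<le> 3" "0 < opt P6 2"
proof -
  let ?g = "restrict (\<lambda>j. j mod 2) {..<6}"
  have g: "?g \<in> {..<length P6} \<rightarrow>\<^sub>E {..<2}" by (auto simp: P6_def)
  have "makespan P6 ?g 2 \<le> 3"
  proof (rule makespan_le)
    fix k :: nat assume k: "k < 2"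
    have "{j. j < 6 \<and> ?g j = k} = {j::nat. j < 6 \<and> j mod 2 = k}" by auto
    thus "load P6 ?g k \<le> 3" using card6b[OF k] unfolding P6_def load_rep by simp
  qed simp
  thus "opt P6 2 \<le> 3" using opt_le[OF g] by simp
  have "1 \<le> opt P6 2"
  proof (rule opt_ge[OF g])
    fix g assume g: "g \<in> {..<length P6} \<rightarrow>\<^sub>E {..<2::nat}"
    have "length P6 = 6" by (simp add: P6_def)
    hence g0: "g 0 < 2" using PiE_mem[OF g, of 0] by simp
    have "0 \<in> {j. j < 6 \<and> g j = g 0}" by simp
    hence ne: "{j. j < 6 \<and> g j = g 0} \<noteq> {}" by blast
    have "finite {j::nat. j < 6 \<and> g j = g 0}" by simp
    hence "card {j. j < 6 \<and> g j = g 0} \<noteq> 0" using ne by simp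
    hence "1 \<le> card {j. j < 6 \<and> g j = g 0}" by linarith
    hence "(1::real) \<le> real (card {j. j < 6 \<and> g j = g 0})" by (metis of_nat_1 of_nat_le_iff)
    hence "1 \<le> load P6 g (g 0)" unfolding P6_def load_rep .
    also have "\<dots> \<le> makespan P6 g 2" by (rule makespan_ge[OF g0])
    finally show "1 \<le> makespan P6 g 2" .
  qed
  thus "0 < opt P6 2" by simp
qed

theorem theorem6:
  fixes \<alpha> :: real
    and part :: "real list \<Rightarrow> nat \<Rightarrow> nat \<Rightarrow> nat \<Rightarrow> nat"
    and sched :: "real list \<Rightarrow> nat \<Rightarrow> nat \<Rightarrow> nat \<Rightarrow> nat \<Rightarrow> nat"
  assumes "0 \<le> \<alpha>" and "\<alpha> < 1/2"
    and "valid_alg part sched"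
    and "consistent part sched (1 + \<alpha>)"
  shows "robustness part sched \<ge> ereal ((4 - 2 * \<alpha>) / 3)"
proof -
  define b where "b = part P6 3 3"
  define s3 where "s3 = sched P6 3 3 3"
  define s2 where "s2 = sched P6 3 3 2"
  have vi: "valid_input P6 3 3" by (simp add: valid_input_def P6_def)
  have b3: "\<And>j. j < 6 \<Longrightarrow> b j < 3" using assms(3) vi unfolding valid_alg_def b_def
    by (auto simp: P6_def)
  have s3: "\<And>i. i < 3 \<Longrightarrow> s3 i < 3" using assms(3) vi unfolding valid_alg_def s3_def by auto
  have s2: "\<And>i. i < 3 \<Longrightarrow> s2 i < 2" using assms(3) vi unfolding valid_alg_def s2_def by auto
  have "alg part sched P6 3 3 3 \<le> (1 + \<alpha>) * opt P6 3"
    using assms(4) vi unfolding consistent_def by blast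
  also have "\<dots> \<le> (1 + \<alpha>) * 2" using opt3 assms(1) by (intro mult_left_mono) auto
  finally have a3: "alg part sched P6 3 3 3 < 3" using assms(2) by simp
  define C where "C k = card {j. j < 6 \<and> b j = k}" for k
  have C2: "C k \<le> 2" if k: "k < 3" for k
  proof -
    have "C k \<le> card {j. j < 6 \<and> s3 (b j) = s3 k}"
      unfolding C_def by (intro card_mono) auto
    also have "real \<dots> = load P6 (\<lambda>j. s3 (b j)) (s3 k)" unfolding P6_def load_rep by simp
    also have "\<dots> \<le> alg part sched P6 3 3 3" unfolding alg_def s3_def b_def
      using s3[OF k] makespan_ge unfolding s3_def b_def by blast
    finally have "real (C k) < 3" using a3 by simp
    thus ?thesis by simp
  qed
  have pig: "\<exists>k1 k2 k3. {k1,k2,k3} = {0,1,2::nat} \<and> s2 k1 = s2 k2"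
  proof -
    have "s2 0 < 2" "s2 1 < 2" "s2 2 < 2" using s2[of 0] s2[of 1] s2[of 2] by simp_all
    hence "s2 0 = s2 1 \<or> s2 0 = s2 2 \<or> s2 1 = s2 2" by linarith
    thus ?thesis
    proof (elim disjE)
      assume h: "s2 0 = s2 1"
      have "{0,1,2::nat} = {0,1,2} \<and> s2 0 = s2 1" using h by simp
      thus ?thesis by (rule exI[of _ 0, OF exI[of _ 1, OF exI[of _ 2]]])
    next
      assume h: "s2 0 = s2 2"
      have "{0,2,1::nat} = {0,1,2} \<and> s2 0 = s2 2" using h by auto
      thus ?thesis by (rule exI[of _ 0, OF exI[of _ 2, OF exI[of _ 1]]])
    next
      assume h: "s2 1 = s2 2"
      have "{1,2,0::nat} = {0,1,2} \<and> s2 1 = s2 2" using h by auto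
      thus ?thesis by (rule exI[of _ 1, OF exI[of _ 2, OF exI[of _ 0]]])
    qed
  qed
  then obtain k1 k2 k3 where K: "{k1,k2,k3} = {0,1,2::nat}" and E: "s2 k1 = s2 k2" by blast
  have "k3 \<in> {k1,k2,k3}" "k1 \<in> {k1,k2,k3}" by simp_all
  hence k3: "k3 < 3" and k1: "k1 < 3" unfolding K by auto
  have sub: "{..<6} - {j. j < 6 \<and> b j = k3} \<subseteq> {j. j < 6 \<and> s2 (b j) = s2 k1}"
  proof
    fix j assume j: "j \<in> {..<6} - {j. j < 6 \<and> b j = k3}"
    hence "b j < 3" using b3 by auto
    hence "b j = 0 \<or> b j = 1 \<or> b j = 2" by presburger
    hence "b j \<in> {0,1,2}" by blast
    hence "b j \<in> {k1,k2,k3}" using K by simp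
    thus "j \<in> {j. j < 6 \<and> s2 (b j) = s2 k1}" using j E by auto
  qed
  have "card ({..<6::nat} - {j. j < 6 \<and> b j = k3}) = 6 - C k3"
    unfolding C_def by (subst card_Diff_subset) auto
  hence "4 \<le> card ({..<6::nat} - {j. j < 6 \<and> b j = k3})" using C2[OF k3] by simp
  also have "\<dots> \<le> card {j. j < 6 \<and> s2 (b j) = s2 k1}" by (intro card_mono[OF _ sub]) auto
  finally have "(4::real) \<le> load P6 (\<lambda>j. s2 (b j)) (s2 k1)" unfolding P6_def load_rep by simp
  also have "\<dots> \<le> alg part sched P6 3 3 2" unfolding alg_def
    using s2[OF k1] makespan_ge unfolding s2_def b_def by blast
  finally have A: "4 \<le> alg part sched P6 3 3 2" .
  have "(4 - 2 * \<alpha>) / 3 \<le> 4 / 3" using assms(1) by simp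
  also have "4 / 3 \<le> alg part sched P6 3 3 2 / opt P6 2"
    using A opt2 by (simp add: divide_simps)
  finally have R: "(4 - 2 * \<alpha>) / 3 \<le> alg part sched P6 3 3 2 / opt P6 2" .
  have mem: "(P6, 3, 3, 2) \<in> {(p, m, mh, m0). valid_input p m mh \<and> 1 \<le> m0 \<and> m0 \<le> m}"
    using vi by simp
  have "ereal (alg part sched P6 3 3 2 / opt P6 2) \<le> robustness part sched"
    unfolding robustness_def by (rule SUP_upper2[OF mem]) simp
  thus ?thesis using R by (meson ereal_less_eq(3) order_trans)
qed

end
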